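(* Let $s\ge 3$ and $n\ge 1$ be integers and let $\{M_1,\dots,M_{s-2}\}$ be a collection of mutually orthogonal sudoku solutions of order $n^2$ with symbols $\{0,1,\dots,n^2-1\}$. The collection is strongly orthogonal if and only if all of the following hold: (i) for every $i\in\{1,\dots,s-2\}$, every canonical $n\times n$ subsquare of $R(M_i)$ is a Latin square (on the symbols $\{0,\dots,n-1\}$); (ii) for every ordered pair of distinct $i,j\in\{1,\dots,s-2\}$ (relevant only when $s\ge 4$): (a) the composite solution $N_{ij}$ is a sudoku solution; (b) each large row of $R(M_i)$ is orthogonal to the corresponding large row of $M_j$; (c) each large column of $R(M_i)$ is orthogonal to the corresponding large column of $M_j$; (iii) for all pairwise distinct $i,j,k\in\{1,\dots,s-2\}$ (relevant only when $s\ge 5$): (a) each large row of $N_{ij}$ is orthogonal to the corresponding large row of $R(M_k)$; (b) each large column of $N_{ij}$ is orthogonal to the corresponding large column of $R(M_k)$; (c) $N_{ij}$ and $M_k$ are orthogonal; (iv) for all pairwise distinct $i,j,k,l\in\{1,\dots,s-2\}$ (relevant only when $s\ge 6$): $N_{ij}$ and $N_{kl}$ are orthogonal.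
   Context: A sudoku solution of order $n^2$ is an $n^2\times n^2$ array with entries in $\{0,1,\dots,n^2-1\}$ in which every symbol appears exactly once in each row, each column, and each of the $n^2$ canonical $n\times n$ subsquares (rows $an,\dots,an+n-1$, columns $bn,\dots,bn+n-1$). Rows and columns are numbered from $0$ (top, left). A location is identified with $(x_1,x_2,x_3,x_4)\in\mathbb{Z}_n^4$, meaning row $x_1n+x_2$ and column $x_3n+x_4$. The large row $x_1$ is the $n\times n^2$ subarray of rows $x_1n,\dots,x_1n+n-1$; the large column $x_3$ is the $n^2\times n$ subarray of columns $x_3n,\dots,x_3n+n-1$. Two arrays of the same shape with symbol sets $A$, $B$ with $|A||B|$ equal to the number of cells are orthogonal if upon superimposition every ordered pair in $A\times B$ appears exactly once. Every $x\in\{0,\dots,n^2-1\}$ is written $x=b_n\cdot n+b_1$ with $b_n,b_1\in\{0,\dots,n-1\}$; $b_n$ is the radix digit and $b_1$ the units digit. For a sudoku solution $M$, the radix solution $R(M)$ is the $n^2\times n^2$ array whose entry at each location is the radix digit of the entry of $M$ there. For sudoku solutions $M_i,M_j$, the composite solution $N_{ij}$ is the $n^2\times n^2$ array whose entry at each location is $n\cdot r_i+r_j$, where $r_i,r_j$ are the entries of $R(M_i),R(M_j)$ at that location. An ordered orthogonal array of type $\mathrm{OOA}(4,s,2,v)$ is a $2s\times v^4$ array over an alphabet of size $v$, whose rows are labeled $(i,j)$, $1\le i\le s$, $j\in\{1,2\}$, such that for every top-justified set $T$ of $4$ rows (i.e. $(i,2)\in T$ implies $(i,1)\in T$) the subarray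 formed by the rows of $T$ contains each $4$-tuple over the alphabet exactly once as a column. Given sudoku solutions $M_1,\dots,M_{s-2}$ of order $n^2$, the associated array is the $2s\times n^4$ array over $\{0,\dots,n-1\}$ having one column for each location $(x_1,x_2,x_3,x_4)\in\mathbb{Z}_n^4$, whose entries in rows $(1,1),(1,2),(2,1),(2,2)$ are $x_1,x_2,x_3,x_4$, and whose entries in rows $(i+2,1)$ and $(i+2,2)$ are the radix digit and units digit, respectively, of the symbol of $M_i$ at that location ($1\le i\le s-2$). A collection $\{M_1,\dots,M_{s-2}\}$ of mutually orthogonal sudoku solutions of order $n^2$ is strongly orthogonal if its associated array is an $\mathrm{OOA}(4,s,2,n)$. *)

theory Defs
  imports "HOL-Library.FuncSet"
begin

text \<open>Arrays of order n^2 are functions row -> column -> symbol (nat => nat => nat),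
  rows and columns numbered from 0.\<close>

definition orth_on :: "'c set \<Rightarrow> nat set \<Rightarrow> nat set \<Rightarrow> ('c \<Rightarrow> nat) \<Rightarrow> ('c \<Rightarrow> nat) \<Rightarrow> bool" where
  "orth_on C A B f g \<longleftrightarrow> bij_betw (\<lambda>x. (f x, g x)) C (A \<times> B)"

definition grid :: "nat \<Rightarrow> (nat \<times> nat) set" where
  "grid n = {0..<n^2} \<times> {0..<n^2}"

definition large_row :: "nat \<Rightarrow> nat \<Rightarrow> (nat \<times> nat) set" where
  "large_row n a = {a*n..<a*n+n} \<times> {0..<n^2}"

definition large_col :: "nat \<Rightarrow> nat \<Rightarrow> (nat \<times> nat) set" where
  "large_col n b = {0..<n^2} \<times> {b*n..<b*n+n}"

definition sudoku :: "nat \<Rightarrow> (nat \<Rightarrow> nat \<Rightarrow> nat) \<Rightarrow> bool" where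
  "sudoku n M \<longleftrightarrow>
     (\<forall>r<n^2. bij_betw (\<lambda>c. M r c) {0..<n^2} {0..<n^2}) \<and>
     (\<forall>c<n^2. bij_betw (\<lambda>r. M r c) {0..<n^2} {0..<n^2}) \<and>
     (\<forall>a<n. \<forall>b<n. bij_betw (\<lambda>(u,v). M (a*n+u) (b*n+v)) ({0..<n} \<times> {0..<n}) {0..<n^2})"

definition radix :: "nat \<Rightarrow> (nat \<Rightarrow> nat \<Rightarrow> nat) \<Rightarrow> nat \<Rightarrow> nat \<Rightarrow> nat" where
  "radix n M r c = M r c div n"

definition composite :: "nat \<Rightarrow> (nat \<Rightarrow> nat \<Rightarrow> nat) \<Rightarrow> (nat \<Rightarrow> nat \<Rightarrow> nat) \<Rightarrow> nat \<Rightarrow> nat \<Rightarrow> nat" where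
  "composite n Mi Mj r c = n * radix n Mi r c + radix n Mj r c"

definition subsquares_latin :: "nat \<Rightarrow> (nat \<Rightarrow> nat \<Rightarrow> nat) \<Rightarrow> bool" where
  "subsquares_latin n L \<longleftrightarrow>
     (\<forall>a<n. \<forall>b<n.
        (\<forall>u<n. bij_betw (\<lambda>v. L (a*n+u) (b*n+v)) {0..<n} {0..<n}) \<and>
        (\<forall>v<n. bij_betw (\<lambda>u. L (a*n+u) (b*n+v)) {0..<n} {0..<n}))"

definition locations :: "nat \<Rightarrow> (nat \<times> nat \<times> nat \<times> nat) set" where
  "locations n = {0..<n} \<times> {0..<n} \<times> {0..<n} \<times> {0..<n}"

text \<open>Associated array: rows labelled (i,j), 1 <= i <= s, j in {1,2}; columns are locations.\<close>
definition assoc_array :: "nat \<Rightarrow> (nat \<Rightarrow> nat \<Rightarrow> nat \<Rightarrow> nat) \<Rightarrow> nat \<times> nat \<Rightarrow> nat \<times> nat \<times> nat \<times> nat \<Rightarrow> nat" where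
  "assoc_array n M = (\<lambda>(i,j) (x1,x2,x3,x4).
      if i = 1 then (if j = 1 then x1 else x2)
      else if i = 2 then (if j = 1 then x3 else x4)
      else (let v = M (i-2) (x1*n+x2) (x3*n+x4) in if j = 1 then v div n else v mod n))"

definition top_justified4 :: "nat \<Rightarrow> (nat \<times> nat) set \<Rightarrow> bool" where
  "top_justified4 s T \<longleftrightarrow> T \<subseteq> {1..s} \<times> {1,2} \<and> card T = 4 \<and> (\<forall>i. (i,2) \<in> T \<longrightarrow> (i,1) \<in> T)"

definition is_OOA4 :: "nat \<Rightarrow> nat \<Rightarrow> 'c set \<Rightarrow> (nat \<times> nat \<Rightarrow> 'c \<Rightarrow> nat) \<Rightarrow> bool" where
  "is_OOA4 s v Cols A \<longleftrightarrow>
     finite Cols \<and> card Cols = v^4 \<and>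
     (\<forall>r \<in> {1..s} \<times> {1,2}. \<forall>c \<in> Cols. A r c < v) \<and>
     (\<forall>T. top_justified4 s T \<longrightarrow>
        bij_betw (\<lambda>c. restrict (\<lambda>r. A r c) T) Cols (T \<rightarrow>\<^sub>E {0..<v}))"

definition strongly_orthogonal :: "nat \<Rightarrow> nat \<Rightarrow> (nat \<Rightarrow> nat \<Rightarrow> nat \<Rightarrow> nat) \<Rightarrow> bool" where
  "strongly_orthogonal n s M \<longleftrightarrow> is_OOA4 s n (locations n) (assoc_array n M)"

end

theory Submission
  imports Defs
begin

lemma bij_iff_inj:
  assumes "finite B" "card A = card B" "f ` A \<subseteq> B"
  shows "bij_betw f A B \<longleftrightarrow> inj_on f A"
proof
  assume "inj_on f A"
  then have "card (f ` A) = card B" using assms(2) by (simp add: card_image)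
  then have "f ` A = B" using assms(1,3) card_subset_eq by blast
  then show "bij_betw f A B" using \<open>inj_on f A\<close> by (simp add: bij_betw_def)
qed (simp add: bij_betw_def)

lemma lt_sq: "a < n \<Longrightarrow> u < (n::nat) \<Longrightarrow> a*n+u < n^2"
proof -
  assume "a < n" "u < n"
  then have "a*n+u < a*n+n" by simp
  also have "\<dots> = (a+1)*n" by simp
  also have "\<dots> \<le> n*n" using \<open>a<n\<close> by (intro mult_right_mono) auto
  finally show ?thesis by (simp add: power2_eq_square)
qed

lemma all_sq: "(\<forall>r<n^2. P r) \<longleftrightarrow> (\<forall>a<n. \<forall>b<(n::nat). P (a*n+b))"
proof
  assume H: "\<forall>a<n. \<forall>b<n. P (a*n+b)"
  show "\<forall>r<n^2. P r"
  proof (intro allI impI)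
    fix r assume r: "r < n^2"
    then have "n > 0" by (cases n) auto
    have "r div n < n" using r by (simp add: power2_eq_square less_mult_imp_div_less)
    moreover have "r mod n < n" using \<open>n>0\<close> by simp
    ultimately have "P ((r div n)*n + r mod n)" using H by blast
    then show "P r" by simp
  qed
qed (simp add: lt_sq)

lemma ball_sq: "(\<forall>r\<in>{0..<n^2}. P r) \<longleftrightarrow> (\<forall>a<n. \<forall>b<(n::nat). P (a*n+b))"
  using all_sq[of n P] by auto

lemma ball_row: "(\<forall>r\<in>{a*n..<a*n+n}. P r) \<longleftrightarrow> (\<forall>u<(n::nat). P (a*n+u))"
proof
  assume H: "\<forall>u<n. P (a*n+u)"
  show "\<forall>r\<in>{a*n..<a*n+n}. P r"
  proof
    fix r assume "r \<in> {a*n..<a*n+n}"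
    then have "r = a*n + (r - a*n)" "r - a*n < n" by auto
    then show "P r" using H by metis
  qed
qed auto

lemma eq_lin: "b < n \<Longrightarrow> d < (n::nat) \<Longrightarrow> (a*n+b = c*n+d) \<longleftrightarrow> (a = c \<and> b = d)"
proof
  assume "b<n" "d<n" "a*n+b = c*n+d"
  then have "(a*n+b) div n = (c*n+d) div n" "(a*n+b) mod n = (c*n+d) mod n" by simp_all
  then show "a = c \<and> b = d" using \<open>b<n\<close> \<open>d<n\<close> by simp
qed auto

lemma eq_lin2: "b < n \<Longrightarrow> d < (n::nat) \<Longrightarrow> (n*a+b = n*c+d) \<longleftrightarrow> (a = c \<and> b = d)"
  using eq_lin[of b n d a c] by (simp add: mult.commute)

lemma divmod_eq: "((x::nat) div n = y div n \<and> x mod n = y mod n) \<longleftrightarrow> x = y"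
  by (metis div_mult_mod_eq)

definition INJR :: "nat \<Rightarrow> (nat\<Rightarrow>nat\<Rightarrow>nat\<Rightarrow>nat\<Rightarrow>nat\<Rightarrow>nat\<Rightarrow>nat\<Rightarrow>nat\<Rightarrow>bool) \<Rightarrow> bool" where
 "INJR n P \<longleftrightarrow> (\<forall>x1<n.\<forall>x2<n.\<forall>x3<n.\<forall>x4<n.\<forall>y1<n.\<forall>y2<n.\<forall>y3<n.\<forall>y4<n.
   P x1 x2 x3 x4 y1 y2 y3 y4 \<longrightarrow> x1=y1\<and>x2=y2\<and>x3=y3\<and>x4=y4)"

lemma INJR_cong:
  assumes "\<And>x1 x2 x3 x4 y1 y2 y3 y4. x1<n \<Longrightarrow> x2<n \<Longrightarrow> x3<n \<Longrightarrow> x4<n \<Longrightarrow> y1<n \<Longrightarrow> y2<n \<Longrightarrow> y3<n \<Longrightarrow> y4<n \<Longrightarrow>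
     P x1 x2 x3 x4 y1 y2 y3 y4 \<longleftrightarrow> Q x1 x2 x3 x4 y1 y2 y3 y4"
  shows "INJR n P \<longleftrightarrow> INJR n Q"
  unfolding INJR_def using assms by (intro all_cong1 imp_cong[OF refl]) (simp only: assms)

lemma INJR_I:
  assumes "\<And>x1 x2 x3 x4 y1 y2 y3 y4. x1<n \<Longrightarrow> x2<n \<Longrightarrow> x3<n \<Longrightarrow> x4<n \<Longrightarrow> y1<n \<Longrightarrow> y2<n \<Longrightarrow> y3<n \<Longrightarrow> y4<n \<Longrightarrow>
     P x1 x2 x3 x4 y1 y2 y3 y4 \<Longrightarrow> x1=y1\<and>x2=y2\<and>x3=y3\<and>x4=y4"
  shows "INJR n P"
  unfolding INJR_def by (intro allI impI; rule assms; assumption)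

lemma INJR_D:
  assumes "INJR n P" "x1<n" "x2<n" "x3<n" "x4<n" "y1<n" "y2<n" "y3<n" "y4<n" "P x1 x2 x3 x4 y1 y2 y3 y4"
  shows "x1=y1\<and>x2=y2\<and>x3=y3\<and>x4=y4"
  using assms(1)[unfolded INJR_def, rule_format, OF assms(2-10)] .

lemma dec: "r < n^2 \<Longrightarrow> r div n < n \<and> r mod n < (n::nat) \<and> r = (r div n)*n + r mod n"
proof -
  assume r: "r < n^2"
  then have "n > 0" by (cases n) auto
  have "r div n < n" using r by (simp add: power2_eq_square less_mult_imp_div_less)
  moreover have "r mod n < n" using \<open>n>0\<close> by simp
  moreover have "r = (r div n)*n + r mod n" by simp
  ultimately show ?thesis by blast
qed

lemma dec_row: "r \<in> {a*n..<a*n+n} \<Longrightarrow> r div n = a \<and> r mod n < (n::nat) \<and> r = a*n + r mod n"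
proof -
  assume r: "r \<in> {a*n..<a*n+n}"
  then have "n > 0" by auto
  define m where "m = r - a*n"
  have m: "r = a*n + m" "m < n" using r unfolding m_def by auto
  then show ?thesis using \<open>n>0\<close> by simp
qed

lemma shape3: "(\<forall>r<n^2. inj_on (\<lambda>c. G r c) {0..<n^2}) \<longleftrightarrow>
  INJR n (\<lambda>x1 x2 x3 x4 y1 y2 y3 y4. x1=y1 \<and> x2=y2 \<and> G (x1*n+x2) (x3*n+x4) = G (y1*n+y2) (y3*n+y4))" (is "_ \<longleftrightarrow> ?R")
proof
  assume H: "\<forall>r<n^2. inj_on (\<lambda>c. G r c) {0..<n^2}"
  show ?R
  proof (rule INJR_I)
    fix x1 x2 x3 x4 y1 y2 y3 y4 assume b: "x1<n" "x2<n" "x3<n" "x4<n" "y1<n" "y2<n" "y3<n" "y4<n"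
      and P: "x1=y1 \<and> x2=y2 \<and> G (x1*n+x2) (x3*n+x4) = G (y1*n+y2) (y3*n+y4)"
    have "inj_on (\<lambda>c. G (x1*n+x2) c) {0..<n^2}" using H lt_sq b by blast
    moreover have "x3*n+x4 \<in> {0..<n^2}" "y3*n+y4 \<in> {0..<n^2}" using lt_sq b by auto
    ultimately have "x3*n+x4 = y3*n+y4" using P inj_onD by fastforce
    then show "x1=y1\<and>x2=y2\<and>x3=y3\<and>x4=y4" using P b eq_lin by blast
  qed
next
  assume H: "INJR n (\<lambda>x1 x2 x3 x4 y1 y2 y3 y4. x1=y1 \<and> x2=y2 \<and> G (x1*n+x2) (x3*n+x4) = G (y1*n+y2) (y3*n+y4))"
  show "\<forall>r<n^2. inj_on (\<lambda>c. G r c) {0..<n^2}"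
  proof (intro allI impI inj_onI)
    fix r c c' assume r: "r < n^2" and c: "c \<in> {0..<n^2}" "c' \<in> {0..<n^2}" and e: "G r c = G r c'"
    have dr: "r div n < n \<and> r mod n < n \<and> r = (r div n)*n + r mod n" using dec r by blast
    have dc: "c div n < n \<and> c mod n < n \<and> c = (c div n)*n + c mod n" using dec c by simp
    have dc': "c' div n < n \<and> c' mod n < n \<and> c' = (c' div n)*n + c' mod n" using dec c by simp
    have "c div n = c' div n \<and> c mod n = c' mod n"
      using INJR_D[OF H, of "r div n" "r mod n" "c div n" "c mod n" "r div n" "r mod n" "c' div n" "c' mod n"]
        dr dc dc' e by simp
    then show "c = c'" using dc dc' by metis
  qed
qed


lemma obt_sq: "c < n^2 \<Longrightarrow> \<exists>x y. x<n \<and> y<(n::nat) \<and> c = x*n+y"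
  using dec by blast

lemma obt_row: "r \<in> {a*n..<a*n+n} \<Longrightarrow> \<exists>u<(n::nat). r = a*n+u"
  using dec_row by metis

lemma shape4: "(\<forall>c<n^2. inj_on (\<lambda>r. G r c) {0..<n^2}) \<longleftrightarrow>
  INJR n (\<lambda>x1 x2 x3 x4 y1 y2 y3 y4. x3=y3 \<and> x4=y4 \<and> G (x1*n+x2) (x3*n+x4) = G (y1*n+y2) (y3*n+y4))" (is "_ \<longleftrightarrow> ?R")
proof
  assume H: "\<forall>c<n^2. inj_on (\<lambda>r. G r c) {0..<n^2}"
  show ?R
  proof (rule INJR_I)
    fix x1 x2 x3 x4 y1 y2 y3 y4 assume b: "x1<n" "x2<n" "x3<n" "x4<n" "y1<n" "y2<n" "y3<n" "y4<n"
      and P: "x3=y3 \<and> x4=y4 \<and> G (x1*n+x2) (x3*n+x4) = G (y1*n+y2) (y3*n+y4)"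
    have "inj_on (\<lambda>r. G r (x3*n+x4)) {0..<n^2}" using H lt_sq b by blast
    moreover have "x1*n+x2 \<in> {0..<n^2}" "y1*n+y2 \<in> {0..<n^2}" using lt_sq b by auto
    ultimately have "x1*n+x2 = y1*n+y2" using P inj_onD by fastforce
    then show "x1=y1\<and>x2=y2\<and>x3=y3\<and>x4=y4" using P b eq_lin by blast
  qed
next
  assume H: ?R
  show "\<forall>c<n^2. inj_on (\<lambda>r. G r c) {0..<n^2}"
  proof (intro allI impI inj_onI)
    fix c r r' assume c: "c < n^2" and r: "r \<in> {0..<n^2}" "r' \<in> {0..<n^2}" and e: "G r c = G r' c"
    obtain x1 x2 where x: "x1<n" "x2<n" "r = x1*n+x2" using obt_sq[of r n] r by auto
    obtain y1 y2 where y: "y1<n" "y2<n" "r' = y1*n+y2" using obt_sq[of r' n] r by auto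
    obtain x3 x4 where z: "x3<n" "x4<n" "c = x3*n+x4" using obt_sq[of c n] c by auto
    have "x1=y1\<and>x2=y2\<and>x3=x3\<and>x4=x4"
      using INJR_D[OF H, of x1 x2 x3 x4 y1 y2 x3 x4] x y z e by simp
    then show "r = r'" using x y by simp
  qed
qed

lemma shape5: "(\<forall>a<n. \<forall>b<n. inj_on (\<lambda>(u,v). G (a*n+u) (b*n+v)) ({0..<n}\<times>{0..<n})) \<longleftrightarrow>
  INJR n (\<lambda>x1 x2 x3 x4 y1 y2 y3 y4. x1=y1 \<and> x3=y3 \<and> G (x1*n+x2) (x3*n+x4) = G (y1*n+y2) (y3*n+y4))" (is "_ \<longleftrightarrow> ?R")
proof
  assume H: "\<forall>a<n. \<forall>b<n. inj_on (\<lambda>(u,v). G (a*n+u) (b*n+v)) ({0..<n}\<times>{0..<n})"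
  show ?R
  proof (rule INJR_I)
    fix x1 x2 x3 x4 y1 y2 y3 y4 assume b: "x1<n" "x2<n" "x3<n" "x4<n" "y1<n" "y2<n" "y3<n" "y4<n"
      and P: "x1=y1 \<and> x3=y3 \<and> G (x1*n+x2) (x3*n+x4) = G (y1*n+y2) (y3*n+y4)"
    have "inj_on (\<lambda>(u,v). G (x1*n+u) (x3*n+v)) ({0..<n}\<times>{0..<n})" using H b by blast
    moreover have "(x2,x4) \<in> {0..<n}\<times>{0..<n}" "(y2,y4) \<in> {0..<n}\<times>{0..<n}" using b by auto
    ultimately have "(x2,x4) = (y2,y4)" using P inj_onD by fastforce
    then show "x1=y1\<and>x2=y2\<and>x3=y3\<and>x4=y4" using P by blast
  qed
next
  assume H: ?R
  show "\<forall>a<n. \<forall>b<n. inj_on (\<lambda>(u,v). G (a*n+u) (b*n+v)) ({0..<n}\<times>{0..<n})"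
  proof (intro allI impI inj_onI)
    fix a b p p' assume ab: "a<n" "b<n" and p: "p \<in> {0..<n}\<times>{0..<n}" "p' \<in> {0..<n}\<times>{0..<n}"
      and e: "(\<lambda>(u,v). G (a*n+u) (b*n+v)) p = (\<lambda>(u,v). G (a*n+u) (b*n+v)) p'"
    obtain u v where uv: "p = (u,v)" "u<n" "v<n" using p by auto
    obtain u' v' where uv': "p' = (u',v')" "u'<n" "v'<n" using p by auto
    have "a=a\<and>u=u'\<and>b=b\<and>v=v'"
      using INJR_D[OF H, of a u b v a u' b v'] ab uv uv' e by simp
    then show "p = p'" using uv uv' by simp
  qed
qed

lemma shape1: "(\<forall>a<n. \<forall>b<n. \<forall>u<n. inj_on (\<lambda>v. G (a*n+u) (b*n+v)) {0..<n}) \<longleftrightarrow>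
  INJR n (\<lambda>x1 x2 x3 x4 y1 y2 y3 y4. x1=y1 \<and> x2=y2 \<and> x3=y3 \<and> G (x1*n+x2) (x3*n+x4) = G (y1*n+y2) (y3*n+y4))" (is "_ \<longleftrightarrow> ?R")
proof
  assume H: "\<forall>a<n. \<forall>b<n. \<forall>u<n. inj_on (\<lambda>v. G (a*n+u) (b*n+v)) {0..<n}"
  show ?R
  proof (rule INJR_I)
    fix x1 x2 x3 x4 y1 y2 y3 y4 assume b: "x1<n" "x2<n" "x3<n" "x4<n" "y1<n" "y2<n" "y3<n" "y4<n"
      and P: "x1=y1 \<and> x2=y2 \<and> x3=y3 \<and> G (x1*n+x2) (x3*n+x4) = G (y1*n+y2) (y3*n+y4)"
    have "inj_on (\<lambda>v. G (x1*n+x2) (x3*n+v)) {0..<n}" using H b by blast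
    then have "x4 = y4" using P b inj_onD by fastforce
    then show "x1=y1\<and>x2=y2\<and>x3=y3\<and>x4=y4" using P by blast
  qed
next
  assume H: ?R
  show "\<forall>a<n. \<forall>b<n. \<forall>u<n. inj_on (\<lambda>v. G (a*n+u) (b*n+v)) {0..<n}"
  proof (intro allI impI inj_onI)
    fix a b u v v' assume ab: "a<n" "b<n" "u<n" and v: "v \<in> {0..<n}" "v' \<in> {0..<n}"
      and e: "G (a*n+u) (b*n+v) = G (a*n+u) (b*n+v')"
    show "v = v'" using INJR_D[OF H, of a u b v a u b v'] ab v e by simp
  qed
qed

lemma shape2: "(\<forall>a<n. \<forall>b<n. \<forall>v<n. inj_on (\<lambda>u. G (a*n+u) (b*n+v)) {0..<n}) \<longleftrightarrow>
  INJR n (\<lambda>x1 x2 x3 x4 y1 y2 y3 y4. x1=y1 \<and> x3=y3 \<and> x4=y4 \<and> G (x1*n+x2) (x3*n+x4) = G (y1*n+y2) (y3*n+y4))" (is "_ \<longleftrightarrow> ?R")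
proof
  assume H: "\<forall>a<n. \<forall>b<n. \<forall>v<n. inj_on (\<lambda>u. G (a*n+u) (b*n+v)) {0..<n}"
  show ?R
  proof (rule INJR_I)
    fix x1 x2 x3 x4 y1 y2 y3 y4 assume b: "x1<n" "x2<n" "x3<n" "x4<n" "y1<n" "y2<n" "y3<n" "y4<n"
      and P: "x1=y1 \<and> x3=y3 \<and> x4=y4 \<and> G (x1*n+x2) (x3*n+x4) = G (y1*n+y2) (y3*n+y4)"
    have "inj_on (\<lambda>u. G (x1*n+u) (x3*n+x4)) {0..<n}" using H b by blast
    then have "x2 = y2" using P b inj_onD by fastforce
    then show "x1=y1\<and>x2=y2\<and>x3=y3\<and>x4=y4" using P by blast
  qed
next
  assume H: ?R
  show "\<forall>a<n. \<forall>b<n. \<forall>v<n. inj_on (\<lambda>u. G (a*n+u) (b*n+v)) {0..<n}"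
  proof (intro allI impI inj_onI)
    fix a b v u u' assume ab: "a<n" "b<n" "v<n" and u: "u \<in> {0..<n}" "u' \<in> {0..<n}"
      and e: "G (a*n+u) (b*n+v) = G (a*n+u') (b*n+v)"
    show "u = u'" using INJR_D[OF H, of a u b v a u' b v] ab u e by simp
  qed
qed

lemma shape6: "(\<forall>a<n. inj_on g (large_row n a)) \<longleftrightarrow>
  INJR n (\<lambda>x1 x2 x3 x4 y1 y2 y3 y4. x1=y1 \<and> g (x1*n+x2, x3*n+x4) = g (y1*n+y2, y3*n+y4))" (is "_ \<longleftrightarrow> ?R")
proof
  assume H: "\<forall>a<n. inj_on g (large_row n a)"
  show ?R
  proof (rule INJR_I)
    fix x1 x2 x3 x4 y1 y2 y3 y4 assume b: "x1<n" "x2<n" "x3<n" "x4<n" "y1<n" "y2<n" "y3<n" "y4<n"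
      and P: "x1=y1 \<and> g (x1*n+x2, x3*n+x4) = g (y1*n+y2, y3*n+y4)"
    have "inj_on g (large_row n x1)" using H b by blast
    moreover have "(x1*n+x2, x3*n+x4) \<in> large_row n x1" "(y1*n+y2, y3*n+y4) \<in> large_row n x1"
      using lt_sq b P by (auto simp: large_row_def)
    ultimately have "(x1*n+x2, x3*n+x4) = (y1*n+y2, y3*n+y4)" using P inj_onD by fastforce
    then show "x1=y1\<and>x2=y2\<and>x3=y3\<and>x4=y4" using P b eq_lin by auto
  qed
next
  assume H: ?R
  show "\<forall>a<n. inj_on g (large_row n a)"
  proof (intro allI impI inj_onI)
    fix a p p' assume a: "a<n" and p: "p \<in> large_row n a" "p' \<in> large_row n a" and e: "g p = g p'"
    obtain r c where rc: "p = (r,c)" "r \<in> {a*n..<a*n+n}" "c < n^2" using p by (auto simp: large_row_def)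
    obtain r' c' where rc': "p' = (r',c')" "r' \<in> {a*n..<a*n+n}" "c' < n^2" using p by (auto simp: large_row_def)
    obtain u where u: "u<n" "r = a*n+u" using obt_row rc by blast
    obtain u' where u': "u'<n" "r' = a*n+u'" using obt_row rc' by blast
    obtain x3 x4 where z: "x3<n" "x4<n" "c = x3*n+x4" using obt_sq rc by blast
    obtain y3 y4 where z': "y3<n" "y4<n" "c' = y3*n+y4" using obt_sq rc' by blast
    have "a=a\<and>u=u'\<and>x3=y3\<and>x4=y4"
      using INJR_D[OF H, of a u x3 x4 a u' y3 y4] a u u' z z' e rc rc' by simp
    then show "p = p'" using rc rc' u u' z z' by simp
  qed
qed

lemma shape7: "(\<forall>b<n. inj_on g (large_col n b)) \<longleftrightarrow>
  INJR n (\<lambda>x1 x2 x3 x4 y1 y2 y3 y4. x3=y3 \<and> g (x1*n+x2, x3*n+x4) = g (y1*n+y2, y3*n+y4))" (is "_ \<longleftrightarrow> ?R")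
proof
  assume H: "\<forall>b<n. inj_on g (large_col n b)"
  show ?R
  proof (rule INJR_I)
    fix x1 x2 x3 x4 y1 y2 y3 y4 assume b: "x1<n" "x2<n" "x3<n" "x4<n" "y1<n" "y2<n" "y3<n" "y4<n"
      and P: "x3=y3 \<and> g (x1*n+x2, x3*n+x4) = g (y1*n+y2, y3*n+y4)"
    have "inj_on g (large_col n x3)" using H b by blast
    moreover have "(x1*n+x2, x3*n+x4) \<in> large_col n x3" "(y1*n+y2, y3*n+y4) \<in> large_col n x3"
      using lt_sq b P by (auto simp: large_col_def)
    ultimately have "(x1*n+x2, x3*n+x4) = (y1*n+y2, y3*n+y4)" using P inj_onD by fastforce
    then show "x1=y1\<and>x2=y2\<and>x3=y3\<and>x4=y4" using P b eq_lin by auto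
  qed
next
  assume H: ?R
  show "\<forall>b<n. inj_on g (large_col n b)"
  proof (intro allI impI inj_onI)
    fix b p p' assume a: "b<n" and p: "p \<in> large_col n b" "p' \<in> large_col n b" and e: "g p = g p'"
    obtain r c where rc: "p = (r,c)" "c \<in> {b*n..<b*n+n}" "r < n^2" using p by (auto simp: large_col_def)
    obtain r' c' where rc': "p' = (r',c')" "c' \<in> {b*n..<b*n+n}" "r' < n^2" using p by (auto simp: large_col_def)
    obtain u where u: "u<n" "c = b*n+u" using obt_row rc by blast
    obtain u' where u': "u'<n" "c' = b*n+u'" using obt_row rc' by blast
    obtain x1 x2 where z: "x1<n" "x2<n" "r = x1*n+x2" using obt_sq rc by blast
    obtain y1 y2 where z': "y1<n" "y2<n" "r' = y1*n+y2" using obt_sq rc' by blast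
    have "x1=y1\<and>x2=y2\<and>b=b\<and>u=u'"
      using INJR_D[OF H, of x1 x2 b u y1 y2 b u'] a u u' z z' e rc rc' by simp
    then show "p = p'" using rc rc' u u' z z' by simp
  qed
qed

lemma shape8: "inj_on g (grid n) \<longleftrightarrow>
  INJR n (\<lambda>x1 x2 x3 x4 y1 y2 y3 y4. g (x1*n+x2, x3*n+x4) = g (y1*n+y2, y3*n+y4))" (is "_ \<longleftrightarrow> ?R")
proof
  assume H: "inj_on g (grid n)"
  show ?R
  proof (rule INJR_I)
    fix x1 x2 x3 x4 y1 y2 y3 y4 assume b: "x1<n" "x2<n" "x3<n" "x4<n" "y1<n" "y2<n" "y3<n" "y4<n"
      and P: "g (x1*n+x2, x3*n+x4) = g (y1*n+y2, y3*n+y4)"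
    have "(x1*n+x2, x3*n+x4) \<in> grid n" "(y1*n+y2, y3*n+y4) \<in> grid n"
      using lt_sq b by (auto simp: grid_def)
    then have "(x1*n+x2, x3*n+x4) = (y1*n+y2, y3*n+y4)" using H P inj_onD by fastforce
    then show "x1=y1\<and>x2=y2\<and>x3=y3\<and>x4=y4" using b eq_lin by auto
  qed
next
  assume H: ?R
  show "inj_on g (grid n)"
  proof (intro inj_onI)
    fix p p' assume p: "p \<in> grid n" "p' \<in> grid n" and e: "g p = g p'"
    obtain r c where rc: "p = (r,c)" "r < n^2" "c < n^2" using p by (auto simp: grid_def)
    obtain r' c' where rc': "p' = (r',c')" "r' < n^2" "c' < n^2" using p by (auto simp: grid_def)
    obtain x1 x2 where z: "x1<n" "x2<n" "r = x1*n+x2" using obt_sq rc by blast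
    obtain y1 y2 where z': "y1<n" "y2<n" "r' = y1*n+y2" using obt_sq rc' by blast
    obtain x3 x4 where w: "x3<n" "x4<n" "c = x3*n+x4" using obt_sq rc by blast
    obtain y3 y4 where w': "y3<n" "y4<n" "c' = y3*n+y4" using obt_sq rc' by blast
    have "x1=y1\<and>x2=y2\<and>x3=y3\<and>x4=y4"
      using INJR_D[OF H, of x1 x2 x3 x4 y1 y2 y3 y4] z z' w w' e rc rc' by simp
    then show "p = p'" using rc rc' z z' w w' by simp
  qed
qed


definition Jc :: "nat \<Rightarrow> (nat\<Rightarrow>nat\<Rightarrow>nat\<Rightarrow>nat) \<Rightarrow> (nat\<times>nat) set \<Rightarrow> bool" where
 "Jc n M T \<longleftrightarrow> INJR n (\<lambda>x1 x2 x3 x4 y1 y2 y3 y4.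
   (\<forall>r\<in>T. assoc_array n M r (x1,x2,x3,x4) = assoc_array n M r (y1,y2,y3,y4)))"

lemma sud_range: "sudoku n L \<Longrightarrow> r < n^2 \<Longrightarrow> c < n^2 \<Longrightarrow> L r c < n^2"
proof -
  assume a: "sudoku n L" "r < n^2" "c < n^2"
  then have "bij_betw (\<lambda>c. L r c) {0..<n^2} {0..<n^2}" unfolding sudoku_def by blast
  then show ?thesis using a(3) bij_betwE by fastforce
qed

lemma div_lt: "(m::nat) < n^2 \<Longrightarrow> m div n < n"
  by (simp add: power2_eq_square less_mult_imp_div_less)

lemma rad_range: "sudoku n L \<Longrightarrow> r < n^2 \<Longrightarrow> c < n^2 \<Longrightarrow> radix n L r c < n"
  unfolding radix_def using sud_range div_lt by blast

lemma comp_range: "sudoku n L \<Longrightarrow> sudoku n L' \<Longrightarrow> r < n^2 \<Longrightarrow> c < n^2 \<Longrightarrow> composite n L L' r c < n^2"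
proof -
  assume a: "sudoku n L" "sudoku n L'" "r < n^2" "c < n^2"
  have "radix n L r c < n" "radix n L' r c < n" using rad_range a by blast+
  then show ?thesis unfolding composite_def using lt_sq[of "radix n L r c" n "radix n L' r c"]
    by (simp add: mult.commute)
qed

lemma sud_range4: "sudoku n L \<Longrightarrow> x1 < n \<Longrightarrow> x2 < n \<Longrightarrow> x3 < n \<Longrightarrow> x4 < n \<Longrightarrow> L (x1*n+x2) (x3*n+x4) div n < n"
  using sud_range lt_sq div_lt by blast

lemma row_bound: "a < n \<Longrightarrow> r \<in> {a*n..<a*n+(n::nat)} \<Longrightarrow> r < n^2"
  using lt_sq[of a n "r - a*n"] by auto

lemma orth_inj:
  assumes "finite A" "finite B" "card D = card A * card B" "\<forall>x\<in>D. f x \<in> A \<and> g x \<in> B"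
  shows "orth_on D A B f g \<longleftrightarrow> inj_on (\<lambda>x. (f x, g x)) D"
  unfolding orth_on_def using assms by (intro bij_iff_inj) (auto simp: card_cartesian_product)

lemma C3:
  assumes si: "sudoku n (M i)" and sj: "sudoku n (M j)" and ij: "0 < i" "0 < j" "i \<noteq> j"
  shows "(\<forall>a<n. orth_on (large_row n a) {0..<n} {0..<n^2} (case_prod (radix n (M i))) (case_prod (M j)))
     \<longleftrightarrow> Jc n M {(1,1),(Suc (Suc i),1),(Suc (Suc j),1),(Suc (Suc j),2)}"
proof -
  have "(\<forall>a<n. orth_on (large_row n a) {0..<n} {0..<n^2} (case_prod (radix n (M i))) (case_prod (M j)))
    \<longleftrightarrow> (\<forall>a<n. inj_on (\<lambda>x. (case_prod (radix n (M i)) x, case_prod (M j) x)) (large_row n a))"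
  proof (intro all_cong1 imp_cong[OF refl] orth_inj)
    fix a assume a: "a < n"
    show "card (large_row n a) = card {0..<n} * card {0..<n^2}" by (simp add: large_row_def)
    show "\<forall>x\<in>large_row n a. case_prod (radix n (M i)) x \<in> {0..<n} \<and> case_prod (M j) x \<in> {0..<n^2}"
      using a row_bound rad_range[OF si] sud_range[OF sj] by (auto simp: large_row_def)
  qed auto
  also have "\<dots> \<longleftrightarrow> Jc n M {(1,1),(Suc (Suc i),1),(Suc (Suc j),1),(Suc (Suc j),2)}"
    unfolding shape6 Jc_def
  proof (rule INJR_cong)
    fix x1 x2 x3 x4 y1 y2 y3 y4 
    show "(x1 = y1 \<and> (case (x1*n+x2, x3*n+x4) of (x, y) \<Rightarrow> radix n (M i) x y, case (x1*n+x2, x3*n+x4) of (x, y) \<Rightarrow> M j x y) = 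
       (case (y1*n+y2, y3*n+y4) of (x, y) \<Rightarrow> radix n (M i) x y, case (y1*n+y2, y3*n+y4) of (x, y) \<Rightarrow> M j x y)) \<longleftrightarrow>
      (\<forall>r\<in>{(1,1),(Suc (Suc i),1),(Suc (Suc j),1),(Suc (Suc j),2)}. assoc_array n M r (x1,x2,x3,x4) = assoc_array n M r (y1,y2,y3,y4))"
      using ij by (simp add: radix_def assoc_array_def divmod_eq)
  qed
  finally show ?thesis .
qed

lemma sorted_obt:
  assumes "finite (A::nat set)"
  obtains xs where "sorted_wrt (<) xs" "set xs = A" "length xs = card A"
  using assms strict_sorted_list_of_set set_sorted_list_of_set length_sorted_list_of_set by blast

lemma card2: "finite A \<Longrightarrow> card A = 2 \<Longrightarrow> \<exists>a b::nat. a<b \<and> A={a,b}"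
proof -
  assume A: "finite A" "card A = 2"
  then obtain xs where xs: "sorted_wrt (<) xs" "set xs = A" "length xs = 2" using sorted_obt by metis
  then obtain a b where "xs = [a,b]" by (auto simp: numeral_eq_Suc length_Suc_conv)
  then show ?thesis using xs by auto
qed

lemma card3: "finite A \<Longrightarrow> card A = 3 \<Longrightarrow> \<exists>a b c::nat. a<b \<and> b<c \<and> A={a,b,c}"
proof -
  assume A: "finite A" "card A = 3"
  then obtain xs where xs: "sorted_wrt (<) xs" "set xs = A" "length xs = 3" using sorted_obt by metis
  then obtain a b c where "xs = [a,b,c]" by (auto simp: numeral_eq_Suc length_Suc_conv)
  then show ?thesis using xs by auto
qed

lemma card4: "finite A \<Longrightarrow> card A = 4 \<Longrightarrow> \<exists>a b c d::nat. a<b \<and> b<c \<and> c<d \<and> A={a,b,c,d}"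
proof -
  assume A: "finite A" "card A = 4"
  then obtain xs where xs: "sorted_wrt (<) xs" "set xs = A" "length xs = 4" using sorted_obt by metis
  then obtain a b c d where "xs = [a,b,c,d]" by (auto simp: numeral_eq_Suc length_Suc_conv)
  then show ?thesis using xs by auto
qed

lemma restrict_eq_iff: "(restrict f T = restrict g T) \<longleftrightarrow> (\<forall>r\<in>T. f r = g r)"
  by (auto simp: restrict_def fun_eq_iff)


lemma ball4: "(\<forall>x\<in>{0..<n}\<times>{0..<n}\<times>{0..<n}\<times>{0..<n}. Q x) \<longleftrightarrow> (\<forall>x1<n.\<forall>x2<n.\<forall>x3<n.\<forall>x4<(n::nat). Q (x1,x2,x3,x4))"
  by auto

lemma inj_Jc: "inj_on (\<lambda>c. restrict (\<lambda>r. assoc_array n M r c) T) (locations n) \<longleftrightarrow> Jc n M T"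
  unfolding inj_on_def restrict_eq_iff Jc_def INJR_def locations_def
  by (simp only: ball4 prod.inject)

lemma L1:
  assumes n: "n \<ge> 1" and sud: "\<forall>i \<in> {1..s-2}. sudoku n (M i)"
  shows "strongly_orthogonal n s M \<longleftrightarrow> (\<forall>T. top_justified4 s T \<longrightarrow> Jc n M T)"
proof -
  have fin: "finite (locations n)" by (simp add: locations_def)
  have card: "card (locations n) = n^4" by (simp add: locations_def card_cartesian_product power4_eq_xxxx)
  have rng: "\<forall>r\<in>{1..s}\<times>{1,2::nat}. \<forall>c\<in>locations n. assoc_array n M r c < n"
  proof (intro ballI)
    fix r c assume r: "r \<in> {1..s}\<times>{1,2::nat}" and c: "c \<in> locations n"
    obtain i j where ij: "r = (i,j)" "i \<in> {1..s}" by (metis r mem_Sigma_iff surj_pair)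
    obtain x1 x2 x3 x4 where x: "c = (x1,x2,x3,x4)" "x1<n" "x2<n" "x3<n" "x4<n" using c by (auto simp: locations_def)
    show "assoc_array n M r c < n"
    proof (cases "i \<le> 2")
      case True then show ?thesis using ij x by (auto simp: assoc_array_def)
    next
      case False
      then have "i - 2 \<in> {1..s-2}" using ij by auto
      then have "sudoku n (M (i-2))" using sud by blast
      then have "M (i-2) (x1*n+x2) (x3*n+x4) div n < n" using sud_range4 x by blast
      moreover have "M (i-2) (x1*n+x2) (x3*n+x4) mod n < n" using n by simp
      ultimately show ?thesis using ij x False by (auto simp: assoc_array_def Let_def)
    qed
  qed
  have key: "bij_betw (\<lambda>c. restrict (\<lambda>r. assoc_array n M r c) T) (locations n) (T \<rightarrow>\<^sub>E {0..<n}) \<longleftrightarrow> Jc n M T"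
    if T: "top_justified4 s T" for T
  proof -
    have Ts: "T \<subseteq> {1..s}\<times>{1,2::nat}" "card T = 4" using T by (auto simp: top_justified4_def)
    then have fT: "finite T" by (meson finite_SigmaI finite_atLeastAtMost finite_insert finite.emptyI finite_subset)
    have "bij_betw (\<lambda>c. restrict (\<lambda>r. assoc_array n M r c) T) (locations n) (T \<rightarrow>\<^sub>E {0..<n}) \<longleftrightarrow>
          inj_on (\<lambda>c. restrict (\<lambda>r. assoc_array n M r c) T) (locations n)"
    proof (rule bij_iff_inj)
      show "finite (T \<rightarrow>\<^sub>E {0..<n})" using fT by (simp add: finite_PiE)
      show "card (locations n) = card (T \<rightarrow>\<^sub>E {0..<n})" using fT Ts card by (simp add: card_PiE)
      show "(\<lambda>c. restrict (\<lambda>r. assoc_array n M r c) T) ` locations n \<subseteq> T \<rightarrow>\<^sub>E {0..<n}"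
        using rng Ts by (auto simp: PiE_iff)
    qed
    then show ?thesis using inj_Jc by simp
  qed
  show ?thesis unfolding strongly_orthogonal_def is_OOA4_def using fin card rng key by auto
qed


lemma divmod_eq': "((x::nat) div n = y div n \<and> x mod n = y mod n \<and> P) \<longleftrightarrow> x = y \<and> P"
  by (metis div_mult_mod_eq)

lemma C4:
  assumes si: "sudoku n (M i)" and sj: "sudoku n (M j)" and ij: "0 < i" "0 < j" "i \<noteq> j"
  shows "(\<forall>b<n. orth_on (large_col n b) {0..<n} {0..<n^2} (case_prod (radix n (M i))) (case_prod (M j)))
     \<longleftrightarrow> Jc n M {(2,1),(Suc (Suc i),1),(Suc (Suc j),1),(Suc (Suc j),2)}"
proof -
  have "(\<forall>b<n. orth_on (large_col n b) {0..<n} {0..<n^2} (case_prod (radix n (M i))) (case_prod (M j)))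
    \<longleftrightarrow> (\<forall>b<n. inj_on (\<lambda>x. (case_prod (radix n (M i)) x, case_prod (M j) x)) (large_col n b))"
  proof (intro all_cong1 imp_cong[OF refl] orth_inj)
    fix b assume b: "b < n"
    show "card (large_col n b) = card {0..<n} * card {0..<n^2}" by (simp add: large_col_def)
    show "\<forall>x\<in>large_col n b. case_prod (radix n (M i)) x \<in> {0..<n} \<and> case_prod (M j) x \<in> {0..<n^2}"
      using b row_bound rad_range[OF si] sud_range[OF sj] by (auto simp: large_col_def)
  qed auto
  also have "\<dots> \<longleftrightarrow> Jc n M {(2,1),(Suc (Suc i),1),(Suc (Suc j),1),(Suc (Suc j),2)}"
    unfolding shape7 Jc_def by (rule INJR_cong) (use ij in \<open>simp add: radix_def assoc_array_def divmod_eq\<close>)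
  finally show ?thesis .
qed

lemma C5:
  assumes si: "sudoku n (M i)" and sj: "sudoku n (M j)" and sk: "sudoku n (M k)" and ij: "0 < i" "0 < j" "0 < k"
  shows "(\<forall>a<n. orth_on (large_row n a) {0..<n^2} {0..<n} (case_prod (composite n (M i) (M j))) (case_prod (radix n (M k))))
     \<longleftrightarrow> Jc n M {(1,1),(Suc (Suc i),1),(Suc (Suc j),1),(Suc (Suc k),1)}"
proof -
  have "(\<forall>a<n. orth_on (large_row n a) {0..<n^2} {0..<n} (case_prod (composite n (M i) (M j))) (case_prod (radix n (M k))))
    \<longleftrightarrow> (\<forall>a<n. inj_on (\<lambda>x. (case_prod (composite n (M i) (M j)) x, case_prod (radix n (M k)) x)) (large_row n a))"
  proof (intro all_cong1 imp_cong[OF refl] orth_inj)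
    fix a assume a: "a < n"
    show "card (large_row n a) = card {0..<n^2} * card {0..<n}" by (simp add: large_row_def)
    show "\<forall>x\<in>large_row n a. case_prod (composite n (M i) (M j)) x \<in> {0..<n^2} \<and> case_prod (radix n (M k)) x \<in> {0..<n}"
      using a row_bound rad_range[OF sk] comp_range[OF si sj] by (auto simp: large_row_def)
  qed auto
  also have "\<dots> \<longleftrightarrow> Jc n M {(1,1),(Suc (Suc i),1),(Suc (Suc j),1),(Suc (Suc k),1)}"
    unfolding shape6 Jc_def by (rule INJR_cong) (use ij in \<open>simp add: composite_def radix_def assoc_array_def eq_lin2 sud_range4[OF sj]\<close>)
  finally show ?thesis .
qed

lemma C6:
  assumes si: "sudoku n (M i)" and sj: "sudoku n (M j)" and sk: "sudoku n (M k)" and ij: "0 < i" "0 < j" "0 < k"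
  shows "(\<forall>b<n. orth_on (large_col n b) {0..<n^2} {0..<n} (case_prod (composite n (M i) (M j))) (case_prod (radix n (M k))))
     \<longleftrightarrow> Jc n M {(2,1),(Suc (Suc i),1),(Suc (Suc j),1),(Suc (Suc k),1)}"
proof -
  have "(\<forall>b<n. orth_on (large_col n b) {0..<n^2} {0..<n} (case_prod (composite n (M i) (M j))) (case_prod (radix n (M k))))
    \<longleftrightarrow> (\<forall>b<n. inj_on (\<lambda>x. (case_prod (composite n (M i) (M j)) x, case_prod (radix n (M k)) x)) (large_col n b))"
  proof (intro all_cong1 imp_cong[OF refl] orth_inj)
    fix b assume b: "b < n"
    show "card (large_col n b) = card {0..<n^2} * card {0..<n}" by (simp add: large_col_def)
    show "\<forall>x\<in>large_col n b. case_prod (composite n (M i) (M j)) x \<in> {0..<n^2} \<and> case_prod (radix n (M k)) x \<in> {0..<n}"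
      using b row_bound rad_range[OF sk] comp_range[OF si sj] by (auto simp: large_col_def)
  qed auto
  also have "\<dots> \<longleftrightarrow> Jc n M {(2,1),(Suc (Suc i),1),(Suc (Suc j),1),(Suc (Suc k),1)}"
    unfolding shape7 Jc_def by (rule INJR_cong) (use ij in \<open>simp add: composite_def radix_def assoc_array_def eq_lin2 sud_range4[OF sj]\<close>)
  finally show ?thesis .
qed

lemma grid_card: "card (grid n) = card {0..<n^2} * card {0..<n^2}"
  by (simp add: grid_def card_cartesian_product)

lemma C7:
  assumes si: "sudoku n (M i)" and sj: "sudoku n (M j)" and sk: "sudoku n (M k)" and ij: "0 < i" "0 < j" "0 < k"
  shows "orth_on (grid n) {0..<n^2} {0..<n^2} (case_prod (composite n (M i) (M j))) (case_prod (M k))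
     \<longleftrightarrow> Jc n M {(Suc (Suc i),1),(Suc (Suc j),1),(Suc (Suc k),1),(Suc (Suc k),2)}"
proof -
  have "orth_on (grid n) {0..<n^2} {0..<n^2} (case_prod (composite n (M i) (M j))) (case_prod (M k))
    \<longleftrightarrow> inj_on (\<lambda>x. (case_prod (composite n (M i) (M j)) x, case_prod (M k) x)) (grid n)"
    by (rule orth_inj) (use comp_range[OF si sj] sud_range[OF sk] grid_card in \<open>auto simp: grid_def\<close>)
  also have "\<dots> \<longleftrightarrow> Jc n M {(Suc (Suc i),1),(Suc (Suc j),1),(Suc (Suc k),1),(Suc (Suc k),2)}"
    unfolding shape8 Jc_def by (rule INJR_cong) (use ij in \<open>simp add: composite_def radix_def assoc_array_def eq_lin2 sud_range4[OF sj] divmod_eq\<close>)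
  finally show ?thesis .
qed

lemma C8:
  assumes si: "sudoku n (M i)" and sj: "sudoku n (M j)" and sk: "sudoku n (M k)" and sl: "sudoku n (M l)"
    and ij: "0 < i" "0 < j" "0 < k" "0 < l"
  shows "orth_on (grid n) {0..<n^2} {0..<n^2} (case_prod (composite n (M i) (M j))) (case_prod (composite n (M k) (M l)))
     \<longleftrightarrow> Jc n M {(Suc (Suc i),1),(Suc (Suc j),1),(Suc (Suc k),1),(Suc (Suc l),1)}"
proof -
  have "orth_on (grid n) {0..<n^2} {0..<n^2} (case_prod (composite n (M i) (M j))) (case_prod (composite n (M k) (M l)))
    \<longleftrightarrow> inj_on (\<lambda>x. (case_prod (composite n (M i) (M j)) x, case_prod (composite n (M k) (M l)) x)) (grid n)"
    by (rule orth_inj) (use comp_range[OF si sj] comp_range[OF sk sl] grid_card in \<open>auto simp: grid_def\<close>)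
  also have "\<dots> \<longleftrightarrow> Jc n M {(Suc (Suc i),1),(Suc (Suc j),1),(Suc (Suc k),1),(Suc (Suc l),1)}"
    unfolding shape8 Jc_def by (rule INJR_cong) (use ij in \<open>simp add: composite_def radix_def assoc_array_def eq_lin2 sud_range4[OF sj] sud_range4[OF sl]\<close>)
  finally show ?thesis .
qed

lemma H2:
  assumes sk: "sudoku n (M k)" and sl: "sudoku n (M l)" and ij: "0 < k" "0 < l"
    and o: "orth_on (grid n) {0..<n^2} {0..<n^2} (case_prod (M k)) (case_prod (M l))"
  shows "Jc n M {(Suc (Suc k),1),(Suc (Suc k),2),(Suc (Suc l),1),(Suc (Suc l),2)}"
proof -
  have "orth_on (grid n) {0..<n^2} {0..<n^2} (case_prod (M k)) (case_prod (M l))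
    \<longleftrightarrow> inj_on (\<lambda>x. (case_prod (M k) x, case_prod (M l) x)) (grid n)"
    by (rule orth_inj) (use sud_range[OF sk] sud_range[OF sl] grid_card in \<open>auto simp: grid_def\<close>)
  also have "\<dots> \<longleftrightarrow> Jc n M {(Suc (Suc k),1),(Suc (Suc k),2),(Suc (Suc l),1),(Suc (Suc l),2)}"
    unfolding shape8 Jc_def by (rule INJR_cong) (use ij in \<open>simp add: assoc_array_def divmod_eq divmod_eq'\<close>)
  finally show ?thesis using o by simp
qed

lemma H0: "Jc n M {(1,1),(1,2),(2,1),(2,2)}"
  unfolding Jc_def INJR_def by (simp add: assoc_array_def)

lemma C1:
  assumes si: "sudoku n (M i)" and ij: "0 < i"
  shows "subsquares_latin n (radix n (M i)) \<longleftrightarrow> Jc n M {(1,1),(1,2),(2,1),(Suc (Suc i),1)} \<and> Jc n M {(1,1),(2,1),(2,2),(Suc(Suc i),1)}"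
proof -
  have rng: "\<And>a u b v. a<n \<Longrightarrow> u<n \<Longrightarrow> b<n \<Longrightarrow> v<n \<Longrightarrow> radix n (M i) (a*n+u) (b*n+v) < n"
    using rad_range[OF si] lt_sq by blast
  have "subsquares_latin n (radix n (M i)) \<longleftrightarrow> 
     (\<forall>a<n. \<forall>b<n.
        (\<forall>u<n. inj_on (\<lambda>v. radix n (M i) (a*n+u) (b*n+v)) {0..<n}) \<and>
        (\<forall>v<n. inj_on (\<lambda>u. radix n (M i) (a*n+u) (b*n+v)) {0..<n}))"
    unfolding subsquares_latin_def
    by (simp add: bij_iff_inj image_subset_iff rng)
  also have "\<dots> \<longleftrightarrow> (\<forall>a<n. \<forall>b<n. \<forall>u<n. inj_on (\<lambda>v. radix n (M i) (a*n+u) (b*n+v)) {0..<n}) \<and>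
        (\<forall>a<n. \<forall>b<n. \<forall>v<n. inj_on (\<lambda>u. radix n (M i) (a*n+u) (b*n+v)) {0..<n})"
    by blast
  also have "\<dots> \<longleftrightarrow> Jc n M {(1,1),(1,2),(2,1),(Suc (Suc i),1)} \<and> Jc n M {(1,1),(2,1),(2,2),(Suc(Suc i),1)}"
    unfolding shape1 shape2 Jc_def
    by (intro conj_cong INJR_cong) (use ij in \<open>simp_all add: radix_def assoc_array_def\<close>)
  finally show ?thesis .
qed

lemma sud_inj:
  assumes "\<And>r c. r < n^2 \<Longrightarrow> c < n^2 \<Longrightarrow> L r c < n^2"
  shows "sudoku n L \<longleftrightarrow> (\<forall>r<n^2. inj_on (\<lambda>c. L r c) {0..<n^2}) \<and> (\<forall>c<n^2. inj_on (\<lambda>r. L r c) {0..<n^2}) \<and>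
     (\<forall>a<n. \<forall>b<n. inj_on (\<lambda>(u,v). L (a*n+u) (b*n+v)) ({0..<n}\<times>{0..<n}))"
proof -
  have b: "bij_betw (\<lambda>(u,v). L (a*n+u) (b*n+v)) ({0..<n}\<times>{0..<n}) {0..<n^2} \<longleftrightarrow> inj_on (\<lambda>(u,v). L (a*n+u) (b*n+v)) ({0..<n}\<times>{0..<n})"
    if "a<n" "b<n" for a b
  proof (rule bij_iff_inj)
    show "card ({0..<n}\<times>{0..<n}) = card {0..<n^2}" by (simp add: card_cartesian_product power2_eq_square)
    show "(\<lambda>(u,v). L (a*n+u) (b*n+v)) ` ({0..<n}\<times>{0..<n}) \<subseteq> {0..<n^2}"
      using assms lt_sq that by auto
  qed simp
  have r: "bij_betw (\<lambda>c. L r c) {0..<n^2} {0..<n^2} \<longleftrightarrow> inj_on (\<lambda>c. L r c) {0..<n^2}" if "r < n^2" for r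
    by (rule bij_iff_inj) (use assms that in auto)
  have c: "bij_betw (\<lambda>r. L r c) {0..<n^2} {0..<n^2} \<longleftrightarrow> inj_on (\<lambda>r. L r c) {0..<n^2}" if "c < n^2" for c
    by (rule bij_iff_inj) (use assms that in auto)
  show ?thesis unfolding sudoku_def using b r c by simp
qed

lemma C2:
  assumes si: "sudoku n (M i)" and sj: "sudoku n (M j)" and ij: "0 < i" "0 < j"
  shows "sudoku n (composite n (M i) (M j)) \<longleftrightarrow> Jc n M {(1,1),(1,2),(Suc (Suc i),1),(Suc (Suc j),1)} \<and>
     Jc n M {(2,1),(2,2),(Suc (Suc i),1),(Suc (Suc j),1)} \<and> Jc n M {(1,1),(2,1),(Suc (Suc i),1),(Suc (Suc j),1)}" (is "_ \<longleftrightarrow> ?thesis2")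
proof -
  let ?N = "composite n (M i) (M j)"
  have "sudoku n ?N \<longleftrightarrow> (\<forall>r<n^2. inj_on (\<lambda>c. ?N r c) {0..<n^2}) \<and> (\<forall>c<n^2. inj_on (\<lambda>r. ?N r c) {0..<n^2}) \<and>
     (\<forall>a<n. \<forall>b<n. inj_on (\<lambda>(u,v). ?N (a*n+u) (b*n+v)) ({0..<n}\<times>{0..<n}))"
    by (rule sud_inj) (rule comp_range[OF si sj])
  also have "\<dots> \<longleftrightarrow> ?thesis2"
    unfolding shape3[of n ?N] shape4[of n ?N] shape5[of n ?N] Jc_def
    by (intro conj_cong INJR_cong) (use ij in \<open>simp_all add: composite_def radix_def assoc_array_def eq_lin2 sud_range4[OF sj]\<close>)
  finally show ?thesis .
qed

lemma H1:
  assumes sk: "sudoku n (M k)" and ij: "0 < k"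
  shows "Jc n M {(1,1),(1,2),(Suc (Suc k),1),(Suc (Suc k),2)} \<and>
     Jc n M {(2,1),(2,2),(Suc (Suc k),1),(Suc (Suc k),2)} \<and> Jc n M {(1,1),(2,1),(Suc (Suc k),1),(Suc (Suc k),2)}"
    (is "?thesis2")
proof -
  have "sudoku n (M k) \<longleftrightarrow> (\<forall>r<n^2. inj_on (\<lambda>c. M k r c) {0..<n^2}) \<and> (\<forall>c<n^2. inj_on (\<lambda>r. M k r c) {0..<n^2}) \<and>
     (\<forall>a<n. \<forall>b<n. inj_on (\<lambda>(u,v). M k (a*n+u) (b*n+v)) ({0..<n}\<times>{0..<n}))"
    by (rule sud_inj) (rule sud_range[OF sk])
  also have "\<dots> \<longleftrightarrow> ?thesis2"
    unfolding shape3[of n "M k"] shape4[of n "M k"] shape5[of n "M k"] Jc_def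
    by (intro conj_cong INJR_cong) (use ij in \<open>simp_all add: assoc_array_def divmod_eq\<close>)
  finally show ?thesis using sk by simp
qed

definition RJ :: "nat \<Rightarrow> nat \<Rightarrow> (nat\<Rightarrow>nat\<Rightarrow>nat\<Rightarrow>nat) \<Rightarrow> bool" where
"RJ n s M \<longleftrightarrow>
    (\<forall>i \<in> {1..s-2}. Jc n M {(1,1),(1,2),(2,1),(Suc (Suc i),1)} \<and> Jc n M {(1,1),(2,1),(2,2),(Suc(Suc i),1)}) \<and>
    (\<forall>i \<in> {1..s-2}. \<forall>j \<in> {1..s-2}. i \<noteq> j \<longrightarrow>
        (Jc n M {(1,1),(1,2),(Suc (Suc i),1),(Suc (Suc j),1)} \<and>
         Jc n M {(2,1),(2,2),(Suc (Suc i),1),(Suc (Suc j),1)} \<and> Jc n M {(1,1),(2,1),(Suc (Suc i),1),(Suc (Suc j),1)}) \<and>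
        Jc n M {(1,1),(Suc (Suc i),1),(Suc (Suc j),1),(Suc (Suc j),2)} \<and>
        Jc n M {(2,1),(Suc (Suc i),1),(Suc (Suc j),1),(Suc (Suc j),2)}) \<and>
    (\<forall>i \<in> {1..s-2}. \<forall>j \<in> {1..s-2}. \<forall>k \<in> {1..s-2}. i \<noteq> j \<and> i \<noteq> k \<and> j \<noteq> k \<longrightarrow>
        Jc n M {(1,1),(Suc (Suc i),1),(Suc (Suc j),1),(Suc (Suc k),1)} \<and>
        Jc n M {(2,1),(Suc (Suc i),1),(Suc (Suc j),1),(Suc (Suc k),1)} \<and>
        Jc n M {(Suc (Suc i),1),(Suc (Suc j),1),(Suc (Suc k),1),(Suc (Suc k),2)}) \<and>
    (\<forall>i \<in> {1..s-2}. \<forall>j \<in> {1..s-2}. \<forall>k \<in> {1..s-2}. \<forall>l \<in> {1..s-2}.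
        distinct [i, j, k, l] \<longrightarrow> Jc n M {(Suc (Suc i),1),(Suc (Suc j),1),(Suc (Suc k),1),(Suc (Suc l),1)})"

lemma ss: "2 < b \<Longrightarrow> Suc (Suc (b-2)) = b" by arith

lemma L2a:
  assumes s: "s \<ge> 3" and all: "\<forall>T. top_justified4 s T \<longrightarrow> Jc n M T"
  shows "RJ n s M"
proof -
  have tj: "Jc n M T" if "T \<subseteq> {1..s}\<times>{1,2}" "card T = 4" "\<forall>i. (i,2) \<in> T \<longrightarrow> (i,1) \<in> T" for T
    using all that by (simp add: top_justified4_def)
  show ?thesis unfolding RJ_def
    by (intro conjI ballI impI tj) auto
qed


lemma case8:
  fixes a b c :: nat
  assumes r: "1 \<le> a" "1 \<le> b" and bc: "b < c" and ne: "a \<noteq> b" "a \<noteq> c"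
  obtains "a = 1" "b = 2" | "a = 1" "2 < b" | "a = 2" "b = 1" | "a = 2" "2 < b" 
      | "2 < a" "b = 1" "c = 2" | "2 < a" "b = 1" "2 < c" | "2 < a" "b = 2" | "2 < a" "2 < b"
proof (cases "a = 1")
  case A: True
  show ?thesis
  proof (cases "b = 2")
    case True then show ?thesis using that(1) A by blast
  next
    case False
    then have "2 < b" using A r ne by linarith
    then show ?thesis using that(2) A by blast
  qed
next
  case F1: False
  show ?thesis
  proof (cases "a = 2")
    case A: True
    show ?thesis
    proof (cases "b = 1")
      case True then show ?thesis using that(3) A by blast
    next
      case False
      then have "2 < b" using A r ne by linarith
      then show ?thesis using that(4) A by blast
    qed
  next
    case False
    then have a2: "2 < a" using F1 r by linarith
    show ?thesis
    proof (cases "b = 1")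
      case B: True
      show ?thesis
      proof (cases "c = 2")
        case True then show ?thesis using that(5) a2 B by blast
      next
        case False
        then have "2 < c" using B bc by linarith
        then show ?thesis using that(6) a2 B by blast
      qed
    next
      case False
      show ?thesis
      proof (cases "b = 2")
        case True then show ?thesis using that(7) a2 by blast
      next
        case F: False
        then have "2 < b" using False r by linarith
        then show ?thesis using that(8) a2 by blast
      qed
    qed
  qed
qed

lemma dd: "2 < x \<Longrightarrow> 2 < y \<Longrightarrow> x \<noteq> y \<Longrightarrow> x - 2 \<noteq> (y::nat) - 2" by arith

lemma L2b:
  assumes s: "s \<ge> 3" and R: "RJ n s M"
    and hyp1: "\<forall>k\<in>{1..s-2}. Jc n M {(1,1),(1,2),(Suc (Suc k),1),(Suc (Suc k),2)} \<and>
     Jc n M {(2,1),(2,2),(Suc (Suc k),1),(Suc (Suc k),2)} \<and> Jc n M {(1,1),(2,1),(Suc (Suc k),1),(Suc (Suc k),2)}"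
    and hyp2: "\<forall>k\<in>{1..s-2}. \<forall>l\<in>{1..s-2}. k \<noteq> l \<longrightarrow> Jc n M {(Suc (Suc k),1),(Suc (Suc k),2),(Suc (Suc l),1),(Suc (Suc l),2)}"
    and T: "top_justified4 s T"
  shows "Jc n M T"
proof -
  note R1 = R[unfolded RJ_def, THEN conjunct1, rule_format]
  note R2 = R[unfolded RJ_def, THEN conjunct2, THEN conjunct1, rule_format]
  note R3 = R[unfolded RJ_def, THEN conjunct2, THEN conjunct2, THEN conjunct1, rule_format]
  note R4 = R[unfolded RJ_def, THEN conjunct2, THEN conjunct2, THEN conjunct2, rule_format]
  note H1 = hyp1[rule_format] and H2 = hyp2[rule_format]
  have Ts: "T \<subseteq> {1..s}\<times>{1,2}" "card T = 4" "\<forall>i. (i,2) \<in> T \<longrightarrow> (i,1) \<in> T"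
    using T by (auto simp: top_justified4_def)
  define I1 where "I1 = {i. (i,1::nat) \<in> T}"
  define I2 where "I2 = {i. (i,2::nat) \<in> T}"
  have TI: "T = I1\<times>{1} \<union> I2\<times>{2}" using Ts(1) unfolding I1_def I2_def by auto
  have I1s: "I1 \<subseteq> {1..s}" "I2 \<subseteq> {1..s}" using Ts(1) unfolding I1_def I2_def by auto
  then have fin: "finite I1" "finite I2" using finite_subset by blast+
  have sub: "I2 \<subseteq> I1" using Ts(3) unfolding I1_def I2_def by auto
  have "card T = card (I1\<times>{1::nat}) + card (I2\<times>{2::nat})"
    unfolding TI by (rule card_Un_disjoint) (use fin in auto)
  then have csum: "card I1 + card I2 = 4" using Ts(2) by (simp add: card_cartesian_product)
  have cle: "card I2 \<le> card I1" using card_mono[OF fin(1) sub] .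
  have mem: "x - 2 \<in> {1..s-2}" if "x \<in> I1" "2 < x" for x using that I1s by auto
  consider "card I2 = 2" | "card I2 = 1" | "card I2 = 0" using csum cle by linarith
  then show ?thesis
  proof cases
    case 1
    then have "card I1 = card I2" using csum by simp
    then have "I1 = I2" using sub fin card_subset_eq by metis
    obtain a b where ab: "a<b" "I2 = {a,b}" using card2[OF fin(2) 1] by blast
    have Te: "T = {(a,1),(a,2),(b,1),(b,2)}" using TI ab \<open>I1 = I2\<close> by auto
    have a1: "1 \<le> a" using I1s ab by auto
    have bI: "b \<in> I1" "a \<in> I1" using ab \<open>I1 = I2\<close> by auto
    consider "a = 1" "b = 2" | "a = 1" "2 < b" | "a = 2" | "2 < a" using a1 ab by linarith
    then show ?thesis
    proof cases
      case 1 then show ?thesis using Te H0 by simp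
    next
      case 2
      have "Jc n M {(1,1),(1,2),(Suc (Suc (b-2)),1),(Suc (Suc (b-2)),2)}" using H1[OF mem[OF bI(1) 2(2)]] by blast
      then show ?thesis using Te 2 by (simp add: ss)
    next
      case 3
      then have b2: "2 < b" using ab by simp
      have "Jc n M {(2,1),(2,2),(Suc (Suc (b-2)),1),(Suc (Suc (b-2)),2)}" using H1[OF mem[OF bI(1) b2]] by blast
      then show ?thesis using Te 3 b2 by (simp add: ss)
    next
      case 4
      then have b2: "2 < b" using ab by simp
      have "Jc n M {(Suc (Suc (a-2)),1),(Suc (Suc (a-2)),2),(Suc (Suc (b-2)),1),(Suc (Suc (b-2)),2)}"
        using H2[OF mem[OF bI(2) 4] mem[OF bI(1) b2] dd[OF 4 b2]] ab by simp
      then show ?thesis using Te 4 b2 by (simp add: ss)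
    qed
  next
    case 2
    obtain a where a: "I2 = {a}" using 2 card_1_singletonE by blast
    have aI: "a \<in> I1" using a sub by auto
    have "card (I1 - {a}) = 2" using csum 2 aI fin by simp
    then obtain b c where bc: "b<c" "I1 - {a} = {b,c}" using card2[of "I1 - {a}"] fin by blast
    have I1e: "I1 = {a,b,c}" "a \<noteq> b" "a \<noteq> c" using bc aI by auto
    have Te: "T = {(a,1),(a,2),(b,1),(c,1)}" using TI a I1e by auto
    have r: "1 \<le> a" "1 \<le> b" using I1s I1e by auto
    have bI: "a \<in> I1" "b \<in> I1" "c \<in> I1" using I1e by auto
    consider "a = 1" "b = 2" | "a = 1" "2 < b" | "a = 2" "b = 1" | "a = 2" "2 < b" 
      | "2 < a" "b = 1" "c = 2" | "2 < a" "b = 1" "2 < c" | "2 < a" "b = 2" | "2 < a" "2 < b"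
      by (rule case8[OF r(1) r(2) bc(1) I1e(2) I1e(3)]) blast+
    then show ?thesis
    proof cases
      case 1
      then have c2: "2 < c" using bc by simp
      have "Jc n M {(1,1),(1,2),(2,1),(Suc (Suc (c-2)),1)}" using R1[OF mem[OF bI(3) c2]] by blast
      then show ?thesis using Te 1 c2 by (simp add: ss)
    next
      case 2
      then have c2: "2 < c" using bc by simp
      have "Jc n M {(1,1),(1,2),(Suc (Suc (b-2)),1),(Suc (Suc (c-2)),1)}"
        using R2[OF mem[OF bI(2) 2(2)] mem[OF bI(3) c2] dd[OF 2(2) c2]] bc by blast
      then show ?thesis using Te 2 c2 by (simp add: ss)
    next
      case 3
      then have c2: "2 < c" using bc I1e by simp
      have "Jc n M {(1,1),(2,1),(2,2),(Suc (Suc (c-2)),1)}" using R1[OF mem[OF bI(3) c2]] by blast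
      moreover have "{(1,1),(2,1),(2,2),(Suc (Suc (c-2)),1)} = T" using Te 3 c2 by (auto simp: ss)
      ultimately show ?thesis by simp
    next
      case 4
      then have c2: "2 < c" using bc by simp
      have "Jc n M {(2,1),(2,2),(Suc (Suc (b-2)),1),(Suc (Suc (c-2)),1)}"
        using R2[OF mem[OF bI(2) 4(2)] mem[OF bI(3) c2] dd[OF 4(2) c2]] bc by blast
      then show ?thesis using Te 4 c2 by (simp add: ss)
    next
      case 5
      have "Jc n M {(1,1),(2,1),(Suc (Suc (a-2)),1),(Suc (Suc (a-2)),2)}" using H1[OF mem[OF bI(1) 5(1)]] by blast
      moreover have "{(1,1),(2,1),(Suc (Suc (a-2)),1),(Suc (Suc (a-2)),2)} = T" using Te 5 by (auto simp: ss)
      ultimately show ?thesis by simp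
    next
      case 6
      have "Jc n M {(1,1),(Suc (Suc (c-2)),1),(Suc (Suc (a-2)),1),(Suc (Suc (a-2)),2)}"
        using R2[OF mem[OF bI(3) 6(3)] mem[OF bI(1) 6(1)] dd[OF 6(3) 6(1)]] I1e by blast
      moreover have "{(1,1),(Suc (Suc (c-2)),1),(Suc (Suc (a-2)),1),(Suc (Suc (a-2)),2)} = T"
        using Te 6 by (auto simp: ss)
      ultimately show ?thesis by simp
    next
      case 7
      then have c2: "2 < c" using bc by simp
      have "Jc n M {(2,1),(Suc (Suc (c-2)),1),(Suc (Suc (a-2)),1),(Suc (Suc (a-2)),2)}"
        using R2[OF mem[OF bI(3) c2] mem[OF bI(1) 7(1)] dd[OF c2 7(1)]] I1e by blast
      moreover have "{(2,1),(Suc (Suc (c-2)),1),(Suc (Suc (a-2)),1),(Suc (Suc (a-2)),2)} = T"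
        using Te 7 c2 by (auto simp: ss)
      ultimately show ?thesis by simp
    next
      case 8
      then have c2: "2 < c" using bc by simp
      have d3: "b-2 \<noteq> c-2 \<and> b-2 \<noteq> a-2 \<and> c-2 \<noteq> a-2" using dd 8 c2 I1e bc by auto
      have "Jc n M {(Suc (Suc (b-2)),1),(Suc (Suc (c-2)),1),(Suc (Suc (a-2)),1),(Suc (Suc (a-2)),2)}"
        using R3[OF mem[OF bI(2) 8(2)] mem[OF bI(3) c2] mem[OF bI(1) 8(1)] d3] by blast
      moreover have "{(Suc (Suc (b-2)),1),(Suc (Suc (c-2)),1),(Suc (Suc (a-2)),1),(Suc (Suc (a-2)),2)} = T"
        using Te 8 c2 by (auto simp: ss)
      ultimately show ?thesis by simp
    qed
  next
    case 3
    then have "I2 = {}" using fin by simp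
    have c4: "card I1 = 4" using csum 3 by simp
    obtain a b c d where abcd: "a<b" "b<c" "c<d" "I1 = {a,b,c,d}" using card4[OF fin(1) c4] by blast
    have Te: "T = {(a,1),(b,1),(c,1),(d,1)}" using TI \<open>I2 = {}\<close> abcd by auto
    have r: "1 \<le> a" using I1s abcd by auto
    have bI: "a \<in> I1" "b \<in> I1" "c \<in> I1" "d \<in> I1" using abcd by auto
    consider "a = 1" "b = 2" | "a = 1" "2 < b" | "a = 2" | "2 < a" using r abcd by linarith
    then show ?thesis
    proof cases
      case 1
      then have c2: "2 < c" "2 < d" using abcd by simp_all
      have "Jc n M {(1,1),(2,1),(Suc (Suc (c-2)),1),(Suc (Suc (d-2)),1)}"
        using R2[OF mem[OF bI(3) c2(1)] mem[OF bI(4) c2(2)] dd[OF c2]] abcd by blast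
      then show ?thesis using Te 1 c2 by (simp add: ss)
    next
      case 2
      then have c2: "2 < c" "2 < d" using abcd by simp_all
      have d3: "b-2 \<noteq> c-2 \<and> b-2 \<noteq> d-2 \<and> c-2 \<noteq> d-2" using dd 2 c2 abcd by auto
      have "Jc n M {(1,1),(Suc (Suc (b-2)),1),(Suc (Suc (c-2)),1),(Suc (Suc (d-2)),1)}"
        using R3[OF mem[OF bI(2) 2(2)] mem[OF bI(3) c2(1)] mem[OF bI(4) c2(2)] d3] by blast
      then show ?thesis using Te 2 c2 by (simp add: ss)
    next
      case 3
      then have c2: "2 < b" "2 < c" "2 < d" using abcd by simp_all
      have d3: "b-2 \<noteq> c-2 \<and> b-2 \<noteq> d-2 \<and> c-2 \<noteq> d-2" using dd c2 abcd by auto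
      have "Jc n M {(2,1),(Suc (Suc (b-2)),1),(Suc (Suc (c-2)),1),(Suc (Suc (d-2)),1)}"
        using R3[OF mem[OF bI(2) c2(1)] mem[OF bI(3) c2(2)] mem[OF bI(4) c2(3)] d3] by blast
      then show ?thesis using Te 3 c2 by (simp add: ss)
    next
      case 4
      then have c2: "2 < b" "2 < c" "2 < d" using abcd by simp_all
      have d4: "distinct [a-2, b-2, c-2, d-2]" using dd c2 4 abcd by auto
      have "Jc n M {(Suc (Suc (a-2)),1),(Suc (Suc (b-2)),1),(Suc (Suc (c-2)),1),(Suc (Suc (d-2)),1)}"
        using R4[OF mem[OF bI(1) 4] mem[OF bI(2) c2(1)] mem[OF bI(3) c2(2)] mem[OF bI(4) c2(3)] d4] .
      then show ?thesis using Te 4 c2 by (simp add: ss)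
    qed
  qed
qed

theorem proposition3p2:
  fixes n s :: nat and M :: "nat \<Rightarrow> nat \<Rightarrow> nat \<Rightarrow> nat"
  assumes "s \<ge> 3" and "n \<ge> 1"
    and sud: "\<forall>i \<in> {1..s-2}. sudoku n (M i)"
    and mols: "\<forall>i \<in> {1..s-2}. \<forall>j \<in> {1..s-2}. i \<noteq> j \<longrightarrow>
                 orth_on (grid n) {0..<n^2} {0..<n^2} (case_prod (M i)) (case_prod (M j))"
  shows "strongly_orthogonal n s M \<longleftrightarrow>
    (\<forall>i \<in> {1..s-2}. subsquares_latin n (radix n (M i))) \<and>
    (\<forall>i \<in> {1..s-2}. \<forall>j \<in> {1..s-2}. i \<noteq> j \<longrightarrow>
        sudoku n (composite n (M i) (M j)) \<and>
        (\<forall>a<n. orth_on (large_row n a) {0..<n} {0..<n^2}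
                  (case_prod (radix n (M i))) (case_prod (M j))) \<and>
        (\<forall>b<n. orth_on (large_col n b) {0..<n} {0..<n^2}
                  (case_prod (radix n (M i))) (case_prod (M j)))) \<and>
    (\<forall>i \<in> {1..s-2}. \<forall>j \<in> {1..s-2}. \<forall>k \<in> {1..s-2}. i \<noteq> j \<and> i \<noteq> k \<and> j \<noteq> k \<longrightarrow>
        (\<forall>a<n. orth_on (large_row n a) {0..<n^2} {0..<n}
                  (case_prod (composite n (M i) (M j))) (case_prod (radix n (M k)))) \<and>
        (\<forall>b<n. orth_on (large_col n b) {0..<n^2} {0..<n}
                  (case_prod (composite n (M i) (M j))) (case_prod (radix n (M k)))) \<and>
        orth_on (grid n) {0..<n^2} {0..<n^2}
                  (case_prod (composite n (M i) (M j))) (case_prod (M k))) \<and>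
    (\<forall>i \<in> {1..s-2}. \<forall>j \<in> {1..s-2}. \<forall>k \<in> {1..s-2}. \<forall>l \<in> {1..s-2}.
        distinct [i, j, k, l] \<longrightarrow>
        orth_on (grid n) {0..<n^2} {0..<n^2}
                  (case_prod (composite n (M i) (M j))) (case_prod (composite n (M k) (M l))))" (is "_ \<longleftrightarrow> ?rhs")
proof -
  have sudI: "sudoku n (M i)" if "i \<in> {1..s-2}" for i using sud that by blast
  have A: "strongly_orthogonal n s M \<longleftrightarrow> (\<forall>T. top_justified4 s T \<longrightarrow> Jc n M T)"
    by (rule L1[OF \<open>n \<ge> 1\<close> sud])
  have hyp1: "\<forall>k\<in>{1..s-2}. Jc n M {(1,1),(1,2),(Suc (Suc k),1),(Suc (Suc k),2)} \<and>
     Jc n M {(2,1),(2,2),(Suc (Suc k),1),(Suc (Suc k),2)} \<and> Jc n M {(1,1),(2,1),(Suc (Suc k),1),(Suc (Suc k),2)}"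
    using H1 sudI by auto
  have hyp2: "\<forall>k\<in>{1..s-2}. \<forall>l\<in>{1..s-2}. k \<noteq> l \<longrightarrow> Jc n M {(Suc (Suc k),1),(Suc (Suc k),2),(Suc (Suc l),1),(Suc (Suc l),2)}"
  proof (intro ballI impI)
    fix k l assume k: "k \<in> {1..s-2}" and l: "l \<in> {1..s-2}" and kl: "k \<noteq> l"
    show "Jc n M {(Suc (Suc k),1),(Suc (Suc k),2),(Suc (Suc l),1),(Suc (Suc l),2)}"
      by (rule H2[OF sudI[OF k] sudI[OF l]]) (use k l kl mols in auto)
  qed
  have C: "(\<forall>T. top_justified4 s T \<longrightarrow> Jc n M T) \<longleftrightarrow> RJ n s M"
    using L2a[OF \<open>s \<ge> 3\<close>] L2b[OF \<open>s \<ge> 3\<close> _ hyp1 hyp2] by blast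
  have B: "?rhs \<longleftrightarrow> RJ n s M" unfolding RJ_def
    by (intro conj_cong ball_cong[OF refl] imp_cong[OF refl] C1 C2 C3 C4 C5 C6 C7 C8) (use sudI in auto)
  show ?thesis by (simp only: A B C)
qed

end
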